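(* Let $\nu>0$, let $\mathbf{f}\in L^{\infty}(\mathbb{R}_+;\mathbf{V}_h^* )$, and let $\mathbf{u}_h^{0}=\mathbf{u}_h^{-1}=\mathbf{u}_h^{-2}\in \mathbf{V}_h$ be given initial data. For any time step $\Delta t>0$, let $(\mathbf{u}_h^{n+1},p_h^{n+1})\in \mathbf{X}_h\times Q_h$, $n\ge 0$, be the solution of the extrapolated blended BDF (BLEBDF) scheme for the Navier–Stokes equations: for all $(\mathbf{v}_h,q_h)\in \mathbf{X}_h\times Q_h$, $$\Big(\tfrac{\frac{5}{3}\mathbf{u}_h^{n+1}-\frac{5}{2}\mathbf{u}_h^n+\mathbf{u}_h^{n-1}-\frac{1}{6}\mathbf{u}_h^{n-2}}{\Delta t},\mathbf{v}_h\Big)+\nu(\nabla \mathbf{u}_h^{n+1},\nabla\mathbf{v}_h)+b_1(3\mathbf{u}_h^n-3\mathbf{u}_h^{n-1}+\mathbf{u}_h^{n-2},\mathbf{u}_h^{n+1},\mathbf{v}_h)-(p_h^{n+1},\nabla\cdot\mathbf{v}_h)=(\mathbf{f}^{n+1},\mathbf{v}_h),$$ $$(\nabla\cdot \mathbf{u}_h^{n+1},q_h)=0,$$ where $\mathbf{f}^{n+1}=\mathbf{f}(t^{n+1})$, $t^{n}=n\Delta t$. Set $\mathcal{U}_{k}=[\mathbf{u}_h^{k},\mathbf{u}_h^{k-1},\mathbf{u}_h^{k-2}]^\top$ and $\alpha=\min\{\frac{C_l\nu\Delta t}{16C_P^2},\frac34\}$. Then for every $n\ge 0$, $$\|\mathcal{U}_{n+1}\|_G^2+\frac{\nu\Delta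 t}{4}\|\nabla \mathbf{u}_h^{n+1}\|^2+\frac{\nu\Delta t}{16}\|\nabla\mathbf{u}_h^{n}\|^2\le (1+\alpha)^{-(n+1)}\Big(\|\mathcal{U}_0\|_G^2+\frac{\nu\Delta t}{4}\|\nabla\mathbf{u}_h^{0}\|^2+\frac{\nu\Delta t}{16}\|\nabla\mathbf{u}_h^{-1}\|^2\Big)+\max\Big\{\frac{8C_P^2}{C_l\nu^2},\frac{2\nu^{-1}\Delta t}{3}\Big\}\|\mathbf{f}\|^2_{L^\infty(\mathbb{R}_+;\mathbf{V}_h^* )}.$$
   Context: $\Omega\subset\mathbb{R}^d$, $d\in\{2,3\}$, is a bounded connected Lipschitz domain; $\|\cdot\|$ and $(\cdot,\cdot)$ denote the $L^2(\Omega)$ norm and inner product. $\mathbf{X}=(H^1_0(\Omega))^d$, $Q=L^2_0(\Omega)$ (mean-zero $L^2$ functions). $C_P$ is the Poincaré–Friedrichs constant: $\|\mathbf{v}\|\le C_P\|\nabla\mathbf{v}\|$ for all $\mathbf{v}\in\mathbf{X}$ (also for scalar $H^1_0$ functions). $\mathbf{X}_h\subset\mathbf{X}$, $Q_h\subset Q$ are conforming finite element spaces on a regular triangulation satisfying the discrete inf-sup condition, and $\mathbf{V}_h=\{\mathbf{v}_h\in\mathbf{X}_h:(\nabla\cdot\mathbf{v}_h,q_h)=0\ \forall q_h\in Q_h\}$. The dual norm is $\|\mathbf{f}\|_{\mathbf{V}_h^*}=\sup_{0\ne\mathbf{v}_h\in\mathbf{V}_h}(\mathbf{f},\mathbf{v}_h)/\|\nabla\mathbf{v}_h\|$,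 and $L^\infty(\mathbb{R}_+;\mathbf{V}_h^* )$ is the space of $\mathbf{f}$ with $\|\mathbf{f}\|_{L^\infty(\mathbb{R}_+;\mathbf{V}_h^* )}:=\operatorname{ess\,sup}_{t>0}\|\mathbf{f}(t)\|_{\mathbf{V}_h^*}<\infty$ (and the bound holds at each $t^{n}$). The skew-symmetric trilinear form is $b_1(\mathbf{u},\mathbf{v},\mathbf{w})=\frac12\big(((\mathbf{u}\cdot\nabla)\mathbf{v},\mathbf{w})-((\mathbf{u}\cdot\nabla)\mathbf{w},\mathbf{v})\big)$. The $G$-matrix is $G=\frac{1}{12}\begin{pmatrix}19&-12&3\\-12&10&-3\\3&-3&1\end{pmatrix}$, and for $\mathcal{W}=[w_1,w_2,w_3]^\top$ with $w_i\in L^2(\Omega)$ (scalar or vector), $\|\mathcal{W}\|_G^2=\sum_{i,j=1}^3G_{ij}(w_i,w_j)$. The constants $0<C_l<C_u$ satisfy $C_l\|\mathcal{W}\|_G^2\le\|\mathcal{W}\|^2\le C_u\|\mathcal{W}\|_G^2$ for all such $\mathcal{W}$, where $\|\mathcal{W}\|^2=\sum_i\|w_i\|^2$. *)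

theory Defs
  imports "HOL-Analysis.Analysis" "HOL-Probability.Essential_Supremum"
begin

text \<open>Abstract Hilbert-space setting. 'v models (L^2(Omega))^d, 'm models
  (L^2(Omega))^(d x d) (values of gradients), 's models L^2(Omega) (pressures,
  divergences). The L^2 inner product is the inner product of these types.\<close>

text \<open>Skew-symmetric trilinear form built from the convection form
  conv u v w = ((u . grad) v, w).\<close>
definition b1 :: "('v \<Rightarrow> 'v \<Rightarrow> 'v \<Rightarrow> real) \<Rightarrow> 'v \<Rightarrow> 'v \<Rightarrow> 'v \<Rightarrow> real" where
  "b1 conv u v w = (conv u v w - conv u w v) / 2"

definition Vh :: "'v set \<Rightarrow> 's::real_inner set \<Rightarrow> ('v \<Rightarrow> 's) \<Rightarrow> 'v set" where
  "Vh Xh Qh dv = {v \<in> Xh. \<forall>q\<in>Qh. inner (dv v) q = 0}"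

text \<open>Dual norm on V_h^*, f acting by (f, v_h); the supremum over the empty
  set is taken as 0 (inserting 0 does not change it otherwise since the
  quotient set is symmetric).\<close>
definition dual_norm :: "'v set \<Rightarrow> ('v::real_inner \<Rightarrow> 'm::real_inner) \<Rightarrow> 'v \<Rightarrow> real" where
  "dual_norm V grad f = Sup (insert 0 {inner f v / norm (grad v) | v. v \<in> V \<and> v \<noteq> 0})"

definition Linf_norm :: "'v set \<Rightarrow> ('v::real_inner \<Rightarrow> 'm::real_inner) \<Rightarrow> (real \<Rightarrow> 'v) \<Rightarrow> ereal" where
  "Linf_norm V grad f = esssup (lebesgue_on {0<..}) (\<lambda>t. ereal (dual_norm V grad (f t)))"

definition Gnorm2 :: "'v::real_inner \<Rightarrow> 'v \<Rightarrow> 'v \<Rightarrow> real" where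
  "Gnorm2 w1 w2 w3 =
     (19 * inner w1 w1 - 12 * inner w1 w2 + 3 * inner w1 w3
      - 12 * inner w2 w1 + 10 * inner w2 w2 - 3 * inner w2 w3
      + 3 * inner w3 w1 - 3 * inner w3 w2 + inner w3 w3) / 12"

end

theory Submission
  imports Defs
begin


lemma G_ident:
  fixes a b c d :: "'v::real_inner"
  shows "inner ((5/3) *\<^sub>R a - (5/2) *\<^sub>R b + c - (1/6) *\<^sub>R d) a
     = Gnorm2 a b c - Gnorm2 b c d + (norm (a - 3 *\<^sub>R b + 3 *\<^sub>R c - d))\<^sup>2 / 12"
  apply (simp add: Gnorm2_def power2_norm_eq_inner inner_add_left inner_add_right
        inner_diff_left inner_diff_right inner_commute algebra_simps)
  apply (simp add: field_simps)
  done

lemma dual_bound: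
  fixes grad :: "'v::real_inner \<Rightarrow> 'm::real_inner"
  assumes lin: "linear grad" and CP: "C > 0" and P: "\<forall>w\<in>V. norm w \<le> C * norm (grad w)"
    and v: "v \<in> V"
  shows "inner f v \<le> dual_norm V grad f * norm (grad v)" and "dual_norm V grad f \<ge> 0"
proof -
  let ?S = "insert 0 {inner f v / norm (grad v) | v. v \<in> V \<and> v \<noteq> 0}"
  have bdd: "bdd_above ?S"
  proof (rule bdd_aboveI[where M = "C * norm f"])
    fix x assume "x \<in> ?S"
    then consider "x = 0" | w where "x = inner f w / norm (grad w)" "w \<in> V" "w \<noteq> 0" by blast
    then show "x \<le> C * norm f"
    proof cases
      case 1 then show ?thesis using CP by simp
    next
      case 2
      have "norm w > 0" using 2 by simp
      hence g: "norm (grad w) > 0" using P 2 CP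
        by (smt (verit, best) mult_nonneg_nonneg norm_ge_zero zero_less_mult_iff)
      have "inner f w \<le> norm f * norm w" by (simp add: norm_cauchy_schwarz)
      also have "\<dots> \<le> norm f * (C * norm (grad w))" using P 2 by (simp add: mult_left_mono)
      finally show ?thesis using 2 g by (simp add: divide_le_eq mult.assoc mult.left_commute)
    qed
  qed
  show "dual_norm V grad f \<ge> 0" unfolding dual_norm_def
    by (rule cSup_upper[OF _ bdd]) simp
  show "inner f v \<le> dual_norm V grad f * norm (grad v)"
  proof (cases "v = 0")
    case True
    then show ?thesis using lin \<open>dual_norm V grad f \<ge> 0\<close> by (simp add: linear_0)
  next
    case False
    have g: "norm (grad v) > 0" using P v False CP
      by (smt (verit, best) mult_nonneg_nonneg norm_ge_zero zero_less_mult_iff zero_less_norm_iff)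
    have "inner f v / norm (grad v) \<le> dual_norm V grad f" unfolding dual_norm_def
      by (rule cSup_upper[OF _ bdd]) (use v False in blast)
    then show ?thesis using g by (simp add: divide_le_eq)
  qed
qed



lemma iter_eq:
  fixes a P e D :: real
  assumes "a > 0" "P > 0"
  shows "(e / P + D / a + D) / (1 + a) = e / (P * (1 + a)) + D / a"
proof -
  have "1 + a > 0" using assms by simp
  hence "P * (1 + a) > 0" "a * (1+a) > 0" using assms by simp_all
  then show ?thesis using assms
    by (simp add: divide_simps) (simp add: algebra_simps)
qed

theorem theorem1:
  fixes X Xh :: "'v::real_inner set"
    and Q Qh :: "'s::real_inner set"
    and grad :: "'v \<Rightarrow> 'm::real_inner"
    and dv :: "'v \<Rightarrow> 's"
    and conv :: "'v \<Rightarrow> 'v \<Rightarrow> 'v \<Rightarrow> real"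
    and C_P C_l C_u \<nu> dt :: real
    and f :: "real \<Rightarrow> 'v"
    and u :: "int \<Rightarrow> 'v"
    and p :: "int \<Rightarrow> 's"
    and n :: nat
  assumes spaces: "subspace X" "subspace Q" "subspace Xh" "subspace Qh" "Xh \<subseteq> X" "Qh \<subseteq> Q"
    and fin_dim: "\<exists>B. finite B \<and> span B = Xh" "\<exists>B. finite B \<and> span B = Qh"
    and ops: "linear grad" "linear dv" "dv ` X \<subseteq> Q"
    and conv_lin: "\<And>v w. linear (\<lambda>u. conv u v w)" "\<And>u w. linear (\<lambda>v. conv u v w)"
                  "\<And>u v. linear (\<lambda>w. conv u v w)"
    and inf_sup: "\<exists>\<beta>>0. \<forall>q\<in>Qh. q \<noteq> 0 \<longrightarrow>
                    (\<exists>v\<in>Xh. v \<noteq> 0 \<and> \<beta> * norm q * norm (grad v) \<le> inner (dv v) q)"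
    and poincare: "C_P > 0" "\<forall>v\<in>X. norm v \<le> C_P * norm (grad v)"
    and G_equiv: "0 < C_l" "C_l < C_u"
      "\<forall>w1 w2 w3 :: 'v. C_l * Gnorm2 w1 w2 w3 \<le> (norm w1)\<^sup>2 + (norm w2)\<^sup>2 + (norm w3)\<^sup>2"
      "\<forall>w1 w2 w3 :: 'v. (norm w1)\<^sup>2 + (norm w2)\<^sup>2 + (norm w3)\<^sup>2 \<le> C_u * Gnorm2 w1 w2 w3"
    and nu: "\<nu> > 0" and dt: "dt > 0"
    and f_Linf: "Linf_norm (Vh Xh Qh dv) grad f < \<infinity>"
    and f_nodes: "\<forall>k::nat. ereal (dual_norm (Vh Xh Qh dv) grad (f (real k * dt)))
                     \<le> Linf_norm (Vh Xh Qh dv) grad f"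
    and init: "u 0 \<in> Vh Xh Qh dv" "u (-1) = u 0" "u (-2) = u 0"
    and scheme: "\<forall>k::nat. u (int k + 1) \<in> Xh \<and> p (int k + 1) \<in> Qh \<and>
        (\<forall>v\<in>Xh.
            inner ((1 / dt) *\<^sub>R ((5/3) *\<^sub>R u (int k + 1) - (5/2) *\<^sub>R u (int k)
                                   + u (int k - 1) - (1/6) *\<^sub>R u (int k - 2))) v
          + \<nu> * inner (grad (u (int k + 1))) (grad v)
          + b1 conv (3 *\<^sub>R u (int k) - 3 *\<^sub>R u (int k - 1) + u (int k - 2)) (u (int k + 1)) v
          - inner (p (int k + 1)) (dv v)
          = inner (f (real (k + 1) * dt)) v) \<and>
        (\<forall>q\<in>Qh. inner (dv (u (int k + 1))) q = 0)"
  shows "Gnorm2 (u (int n + 1)) (u (int n)) (u (int n - 1))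
           + \<nu> * dt / 4 * (norm (grad (u (int n + 1))))\<^sup>2
           + \<nu> * dt / 16 * (norm (grad (u (int n))))\<^sup>2
         \<le> (Gnorm2 (u 0) (u (-1)) (u (-2))
              + \<nu> * dt / 4 * (norm (grad (u 0)))\<^sup>2
              + \<nu> * dt / 16 * (norm (grad (u (-1))))\<^sup>2)
             / (1 + min (C_l * \<nu> * dt / (16 * C_P\<^sup>2)) (3/4)) ^ (n + 1)
           + max (8 * C_P\<^sup>2 / (C_l * \<nu>\<^sup>2)) (2 * dt / (3 * \<nu>))
             * (real_of_ereal (Linf_norm (Vh Xh Qh dv) grad f))\<^sup>2"
  proof -
  define V where "V = Vh Xh Qh dv"
  define L where "L = Linf_norm (Vh Xh Qh dv) grad f"
  define M where "M = real_of_ereal L"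
  define \<alpha> where "\<alpha> = min (C_l * \<nu> * dt / (16 * C_P\<^sup>2)) (3/4)"
  define D where "D = dt * M\<^sup>2 / (2 * \<nu>)"
  define E where "E = (\<lambda>k::int. Gnorm2 (u k) (u (k - 1)) (u (k - 2))
        + \<nu> * dt / 4 * (norm (grad (u k)))\<^sup>2 + \<nu> * dt / 16 * (norm (grad (u (k - 1))))\<^sup>2)"
  have VX: "V \<subseteq> X" using spaces(5) unfolding V_def Vh_def by auto
  have PV: "\<forall>w\<in>V. norm w \<le> C_P * norm (grad w)" using poincare VX by auto
  have uV: "u (int k + 1) \<in> V" for k :: nat
    using scheme unfolding V_def Vh_def by auto
  have uX: "u j \<in> X" if "j \<ge> -2" for j :: int
  proof (cases "j \<ge> 1")
    case True
    then obtain k :: nat where "j = int k + 1" by (metis add.commute le_add_diff_inverse zero_le_imp_eq_int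
        add_le_cancel_left diff_add_cancel diff_ge_0_iff_ge)
    then show ?thesis using uV VX by auto
  next
    case False
    then have "j = 0 \<or> j = -1 \<or> j = -2" using that by auto
    then show ?thesis using init VX unfolding V_def by auto
  qed
  have dn0: "dual_norm V grad (f 0) \<ge> 0" using dual_bound(2)[OF ops(1) poincare(1) PV uV[of 0]] .
  have "ereal (dual_norm V grad (f 0)) \<le> L" using f_nodes[rule_format, of 0] unfolding L_def V_def by simp
  then have Lfin: "L = ereal M" using f_Linf dn0 unfolding M_def L_def[symmetric]
    by (cases L) auto
  have M0: "M \<ge> 0" using \<open>ereal (dual_norm V grad (f 0)) \<le> L\<close> dn0 Lfin by simp
  have fM: "inner (f (real (k + 1) * dt)) v \<le> M * norm (grad v)" if "v \<in> V" for k :: nat and v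
  proof -
    have "inner (f (real (k + 1) * dt)) v \<le> dual_norm V grad (f (real (k + 1) * dt)) * norm (grad v)"
      by (rule dual_bound(1)[OF ops(1) poincare(1) PV that])
    also have "\<dots> \<le> M * norm (grad v)"
      using f_nodes[rule_format, of "k+1"] Lfin unfolding L_def V_def by (simp add: mult_right_mono)
    finally show ?thesis .
  qed
  have a0: "\<alpha> > 0" unfolding \<alpha>_def using G_equiv nu dt poincare by auto
  have a1: "\<alpha> \<le> 3/4" unfolding \<alpha>_def by simp
  have a2: "\<alpha> \<le> C_l * \<nu> * dt / (16 * C_P\<^sup>2)" unfolding \<alpha>_def by simp
  have a3: "\<alpha> * (C_P\<^sup>2 / C_l) \<le> \<nu> * dt / 16"
  proof -
    have "\<alpha> * (16 * C_P\<^sup>2) \<le> C_l * \<nu> * dt" using a2 poincare(1) by (simp add: le_divide_eq)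
    then show ?thesis using G_equiv(1) by (simp add: field_simps)
  qed
  have step: "(1 + \<alpha>) * E (int k + 1) \<le> E (int k) + D" for k :: nat
  proof -
    define a where "a = u (int k + 1)"
    define b where "b = u (int k)"
    define c where "c = u (int k - 1)"
    define d where "d = u (int k - 2)"
    define A where "A = (norm (grad a))\<^sup>2"
    define B where "B = (norm (grad b))\<^sup>2"
    define C where "C = (norm (grad c))\<^sup>2"
    define Ga where "Ga = Gnorm2 a b c"
    define Gb where "Gb = Gnorm2 b c d"
    have aV: "a \<in> V" using uV a_def by simp
    have EE: "E (int k + 1) = Ga + \<nu> * dt / 4 * A + \<nu> * dt / 16 * B"
             "E (int k) = Gb + \<nu> * dt / 4 * B + \<nu> * dt / 16 * C"
      unfolding E_def Ga_def Gb_def A_def B_def C_def a_def b_def c_def d_def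
      by (simp_all add: algebra_simps)
    have sch: "inner ((1 / dt) *\<^sub>R ((5/3) *\<^sub>R a - (5/2) *\<^sub>R b + c - (1/6) *\<^sub>R d)) a
          + \<nu> * inner (grad a) (grad a)
          + b1 conv (3 *\<^sub>R b - 3 *\<^sub>R c + d) a a
          - inner (p (int k + 1)) (dv a)
          = inner (f (real (k + 1) * dt)) a"
      using scheme[rule_format, of k] aV spaces(5) unfolding a_def b_def c_def d_def V_def Vh_def by auto
    have pr: "inner (p (int k + 1)) (dv a) = 0"
      using scheme[rule_format, of k] unfolding a_def by (simp add: inner_commute)
    have bz: "b1 conv (3 *\<^sub>R b - 3 *\<^sub>R c + d) a a = 0" by (simp add: b1_def)
    have gi: "inner ((5/3) *\<^sub>R a - (5/2) *\<^sub>R b + c - (1/6) *\<^sub>R d) a \<ge> Ga - Gb"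
      unfolding G_ident Ga_def Gb_def by simp
    have e1: "(Ga - Gb) / dt + \<nu> * A \<le> M * norm (grad a)"
    proof -
      have "(Ga - Gb) / dt \<le> inner ((1 / dt) *\<^sub>R ((5/3) *\<^sub>R a - (5/2) *\<^sub>R b + c - (1/6) *\<^sub>R d)) a"
        using gi dt by (simp add: divide_right_mono)
      moreover have "\<nu> * inner (grad a) (grad a) = \<nu> * A" unfolding A_def by (simp add: power2_norm_eq_inner)
      ultimately show ?thesis using sch pr bz fM[OF aV, of k] by linarith
    qed
    have amgm: "M * norm (grad a) \<le> \<nu> * A / 2 + M\<^sup>2 / (2 * \<nu>)"
    proof -
      have "0 \<le> (\<nu> * norm (grad a) - M)\<^sup>2" by simp
      then have "2 * \<nu> * (M * norm (grad a)) \<le> \<nu> * \<nu> * A + M\<^sup>2"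
        unfolding A_def by (simp add: power2_eq_square algebra_simps)
      then show ?thesis using nu by (simp add: field_simps power2_eq_square)
    qed
    have e2: "Ga + \<nu> * dt / 2 * A \<le> Gb + D"
    proof -
      have "(Ga - Gb) / dt + \<nu> * A / 2 \<le> M\<^sup>2 / (2 * \<nu>)" using e1 amgm by linarith
      then have "dt * ((Ga - Gb) / dt + \<nu> * A / 2) \<le> dt * (M\<^sup>2 / (2 * \<nu>))"
        using dt by (intro mult_left_mono) auto
      moreover have "dt * ((Ga - Gb) / dt + \<nu> * A / 2) = Ga - Gb + \<nu> * dt / 2 * A"
        using dt by (simp add: field_simps)
      moreover have "dt * (M\<^sup>2 / (2 * \<nu>)) = D" unfolding D_def by simp
      ultimately show ?thesis by linarith
    qed
    have bX: "b \<in> X" "c \<in> X" using uX unfolding b_def c_def by auto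
    have aX: "a \<in> X" using aV VX by auto
    have sq: "(norm w)\<^sup>2 \<le> C_P\<^sup>2 * (norm (grad w))\<^sup>2" if "w \<in> X" for w
    proof -
      have "(norm w)\<^sup>2 \<le> (C_P * norm (grad w))\<^sup>2"
        using poincare(2) that by (simp add: power_mono)
      then show ?thesis by (simp add: power_mult_distrib)
    qed
    have GaS: "Ga \<le> (C_P\<^sup>2 / C_l) * (A + B + C)"
    proof -
      have "C_l * Ga \<le> (norm a)\<^sup>2 + (norm b)\<^sup>2 + (norm c)\<^sup>2" using G_equiv(3) unfolding Ga_def by blast
      also have "\<dots> \<le> C_P\<^sup>2 * (A + B + C)" using sq[OF aX] sq[OF bX(1)] sq[OF bX(2)]
        unfolding A_def B_def C_def by (simp add: algebra_simps)
      finally show ?thesis using G_equiv(1) by (simp add: field_simps)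
    qed
    have S0: "A + B + C \<ge> 0" unfolding A_def B_def C_def by simp
    have aGa: "\<alpha> * Ga \<le> \<nu> * dt / 16 * (A + B + C)"
    proof -
      have "\<alpha> * Ga \<le> \<alpha> * ((C_P\<^sup>2 / C_l) * (A + B + C))" using GaS a0 by (intro mult_left_mono) auto
      also have "\<dots> = (\<alpha> * (C_P\<^sup>2 / C_l)) * (A + B + C)" by simp
      also have "\<dots> \<le> \<nu> * dt / 16 * (A + B + C)" using a3 S0 by (intro mult_right_mono) auto
      finally show ?thesis .
    qed
    have vd: "\<nu> * dt > 0" using nu dt by simp
    have tA: "\<alpha> * (\<nu> * dt * A) \<le> 3/4 * (\<nu> * dt * A)"
      using a1 vd unfolding A_def by (intro mult_right_mono) auto
    have tB: "\<alpha> * (\<nu> * dt * B) \<le> 3/4 * (\<nu> * dt * B)"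
      using a1 vd unfolding B_def by (intro mult_right_mono) auto
    have "(1 + \<alpha>) * E (int k + 1) = Ga + \<alpha> * Ga + \<nu> * dt * A / 4 + \<alpha> * (\<nu> * dt * A) / 4
        + \<nu> * dt * B / 16 + \<alpha> * (\<nu> * dt * B) / 16"
      unfolding EE by (simp add: field_simps)
    also have "\<dots> \<le> E (int k) + D"
    proof -
      have nn: "\<nu> * dt * A \<ge> 0" "\<nu> * dt * B \<ge> 0" "\<nu> * dt * C \<ge> 0"
        using vd unfolding A_def B_def C_def by auto
      have aG: "\<alpha> * Ga \<le> \<nu> * dt * A / 16 + \<nu> * dt * B / 16 + \<nu> * dt * C / 16"
        using aGa by (simp add: algebra_simps)
      have e2': "Ga + \<nu> * dt * A / 2 \<le> Gb + D" using e2 by (simp add: algebra_simps)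
      have "E (int k) + D = Gb + \<nu> * dt * B / 4 + \<nu> * dt * C / 16 + D"
        unfolding EE by (simp add: algebra_simps)
      then show ?thesis using nn aG e2' tA tB by linarith
    qed
    finally show ?thesis .
  qed
  have E0: "E 0 = Gnorm2 (u 0) (u (-1)) (u (-2))
              + \<nu> * dt / 4 * (norm (grad (u 0)))\<^sup>2
              + \<nu> * dt / 16 * (norm (grad (u (-1))))\<^sup>2" unfolding E_def by simp
  have D0: "D \<ge> 0" unfolding D_def using dt nu by simp
  have iter: "E (int m) \<le> E 0 / (1 + \<alpha>) ^ m + D / \<alpha>" for m :: nat
  proof (induction m)
    case 0
    then show ?case using D0 a0 by simp
  next
    case (Suc m)
    have q: "1 + \<alpha> > 0" using a0 by simp
    have "(1 + \<alpha>) * E (int m + 1) \<le> E 0 / (1 + \<alpha>) ^ m + D / \<alpha> + D" using step[of m] Suc by linarith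
    then have "E (int m + 1) \<le> (E 0 / (1 + \<alpha>) ^ m + D / \<alpha> + D) / (1 + \<alpha>)"
      using q by (simp add: le_divide_eq mult.commute)
    also have "\<dots> = E 0 / (1 + \<alpha>) ^ Suc m + D / \<alpha>"
    proof -
      have qm: "(1 + \<alpha>) ^ m > 0" using q by simp
      show ?thesis using iter_eq[OF a0 qm, of "E 0" D] by (simp add: mult.commute)
    qed
    finally show ?case by (simp add: add.commute)
  qed
  have Dbound: "D / \<alpha> \<le> max (8 * C_P\<^sup>2 / (C_l * \<nu>\<^sup>2)) (2 * dt / (3 * \<nu>)) * M\<^sup>2"
  proof (cases "C_l * \<nu> * dt / (16 * C_P\<^sup>2) \<le> 3/4")
    case True
    then have ha: "\<alpha> = C_l * \<nu> * dt / (16 * C_P\<^sup>2)" unfolding \<alpha>_def by simp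
    have "(dt * M\<^sup>2 / (2 * \<nu>)) / (C_l * \<nu> * dt / (16 * C_P\<^sup>2)) = 8 * C_P\<^sup>2 / (C_l * \<nu>\<^sup>2) * M\<^sup>2"
      using G_equiv(1) nu dt poincare(1) by (simp add: field_simps power2_eq_square)
    then have "D / \<alpha> = 8 * C_P\<^sup>2 / (C_l * \<nu>\<^sup>2) * M\<^sup>2"
      unfolding D_def ha .
    moreover have "8 * C_P\<^sup>2 / (C_l * \<nu>\<^sup>2) * M\<^sup>2 \<le> max (8 * C_P\<^sup>2 / (C_l * \<nu>\<^sup>2)) (2 * dt / (3 * \<nu>)) * M\<^sup>2"
      "2 * dt / (3 * \<nu>) * M\<^sup>2 \<le> max (8 * C_P\<^sup>2 / (C_l * \<nu>\<^sup>2)) (2 * dt / (3 * \<nu>)) * M\<^sup>2"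
      by (intro mult_right_mono; simp)+
    ultimately show ?thesis by simp
  next
    case False
    then have "\<alpha> = 3/4" unfolding \<alpha>_def by simp
    then have "D / \<alpha> = 2 * dt / (3 * \<nu>) * M\<^sup>2"
      unfolding D_def using nu by (simp add: field_simps)
    moreover have "8 * C_P\<^sup>2 / (C_l * \<nu>\<^sup>2) * M\<^sup>2 \<le> max (8 * C_P\<^sup>2 / (C_l * \<nu>\<^sup>2)) (2 * dt / (3 * \<nu>)) * M\<^sup>2"
      "2 * dt / (3 * \<nu>) * M\<^sup>2 \<le> max (8 * C_P\<^sup>2 / (C_l * \<nu>\<^sup>2)) (2 * dt / (3 * \<nu>)) * M\<^sup>2"
      by (intro mult_right_mono; simp)+
    ultimately show ?thesis by simp
  qed
  have "E (int (n + 1)) \<le> E 0 / (1 + \<alpha>) ^ (n + 1) + D / \<alpha>" by (rule iter)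
  then show ?thesis using Dbound unfolding E0 M_def L_def \<alpha>_def[symmetric]
    unfolding E_def by (simp add: algebra_simps)
qed

end
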